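(* Let $q$ be a positive integer and let $\mathcal{D}_1,\mathcal{D}_2$ be nonempty finite subsets of $[q]\times 2^{[q]}$ such that every $(b,B)\in\mathcal{D}_1\cup\mathcal{D}_2$ has $|B|\ge 2$. Then the following are equivalent: (1) $\mathcal{E}_{\mathcal{D}_1}=\mathcal{E}_{\mathcal{D}_2}$; (2) ${\sf Div}(\mathcal{E}_{\mathcal{D}_1})={\sf Div}(\mathcal{E}_{\mathcal{D}_2})$; (3) $\overline{\mathcal{D}_1}=\overline{\mathcal{D}_2}$; (4) $\min(\overline{\mathcal{D}_1})=\min(\overline{\mathcal{D}_2})$.
   Context: Divisibility relations. Let $\Lambda$ be a finite nonempty set and $U=\{u_i:i\in\Lambda\}$ a set of monomials in a polynomial ring over a field, indexed so that $u_i=u_j$ implies $i=j$. A divisibility relation on $U$ is a pair $(b,B)$ with $b\in\Lambda$ and $\emptyset\ne B\subseteq\Lambda$ such that $u_b\mid \mathrm{lcm}(u_i: i\in B)$; ${\sf Div}(U)$ is the set of all of them. A pair $(b,B)$ is trivial if $b\in B$. $(b,B)^{\sf ex}=\{(b,C): B\subseteq C\subseteq \Lambda\}$. $(b,B)\circ(c,C)=(b,(B\smallsetminus\{c\})\cup C)$. For $\mathcal{D}\subseteq\Lambda\times 2^\Lambda$: $\mathcal{D}^\circ$ is the set of all compositions $(b_1,B_1)\circ\cdots\circ(b_s,B_s)$ with $s\ge1$, $(b_i,B_i)\in\mathcal{D}$, with every possible bracketing; $\mathcal{D}^{\sf ex}=\bigcup_{(b,B)\in\mathcal{D}}(b,B)^{\sf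 ex}$; $\Lambda^{\sf triv}=\{(b,B): b\in B\}$; $\overline{\mathcal{D}}=(\mathcal{D}^\circ)^{\sf ex}\cup\Lambda^{\sf triv}$. $\min(\mathcal{D})$ is the set of nontrivial $(b,B)\in\mathcal{D}$ such that no $(b,C)\in\mathcal{D}$ has $C\subsetneq B$. Here $\Lambda=[q]$. $\mathcal{D}$-extremal ideals. Let $\mathsf k$ be a field and $S_{[q]}=\mathsf k[y_A:\emptyset\ne A\subseteq[q]]$. For $\mathcal{D}\subseteq [q]\times(2^{[q]}\smallsetminus\{\emptyset\})$ let $Q(\mathcal{D})=\{A\subseteq[q]: A\ne\emptyset,\ A\cap B\ne\emptyset \text{ for all }(b,B)\in\mathcal{D}\text{ with } b\in A\}$, $\varepsilon_{\mathcal{D},i}=\prod_{A\in Q(\mathcal{D}),\, i\in A} y_A$, and $\mathcal{E}_{\mathcal{D}}=(\varepsilon_{\mathcal{D},1},\ldots,\varepsilon_{\mathcal{D},q})\subseteq S_{[q]}$. ${\sf Div}(\mathcal{E}_{\mathcal{D}})$ denotes ${\sf Div}(\{\varepsilon_{\mathcal{D},1},\ldots,\varepsilon_{\mathcal{D},q}\})$ with indexing set $[q]$. *)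

theory Defs
  imports Main "HOL-Library.Poly_Mapping"
begin

type_synonym rel = "nat \<times> nat set"

text \<open>A monomial in the variables of type 'v is represented by its exponent
vector  exponent vector.\<close>

definition mono_dvd :: "('v \<Rightarrow>\<^sub>0 nat) \<Rightarrow> ('v \<Rightarrow>\<^sub>0 nat) \<Rightarrow> bool" where
  "mono_dvd u w \<longleftrightarrow> (\<forall>v. Poly_Mapping.lookup u v \<le> Poly_Mapping.lookup w v)"

definition mono_lcm :: "('i \<Rightarrow> ('v \<Rightarrow>\<^sub>0 nat)) \<Rightarrow> 'i set \<Rightarrow> ('v \<Rightarrow>\<^sub>0 nat)" where
  "mono_lcm u B = Abs_poly_mapping (\<lambda>v. Max ((\<lambda>i. Poly_Mapping.lookup (u i) v) ` B))"

definition Div :: "'i set \<Rightarrow> ('i \<Rightarrow> ('v \<Rightarrow>\<^sub>0 nat)) \<Rightarrow> ('i \<times> 'i set) set" where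
  "Div \<Lambda> u = {(b, B). b \<in> \<Lambda> \<and> B \<noteq> {} \<and> B \<subseteq> \<Lambda> \<and> mono_dvd (u b) (mono_lcm u B)}"

definition comp :: "'i \<times> 'i set \<Rightarrow> 'i \<times> 'i set \<Rightarrow> 'i \<times> 'i set" where
  "comp x y = (fst x, (snd x - {fst y}) \<union> snd y)"

inductive_set comp_closure :: "('i \<times> 'i set) set \<Rightarrow> ('i \<times> 'i set) set"
  for D where
  base: "x \<in> D \<Longrightarrow> x \<in> comp_closure D"
| step: "x \<in> comp_closure D \<Longrightarrow> y \<in> comp_closure D \<Longrightarrow> comp x y \<in> comp_closure D"

definition ext :: "'i set \<Rightarrow> ('i \<times> 'i set) set \<Rightarrow> ('i \<times> 'i set) set" where
  "ext \<Lambda> D = {(b, C). \<exists>B. (b, B) \<in> D \<and> B \<subseteq> C \<and> C \<subseteq> \<Lambda>}"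

definition triv :: "'i set \<Rightarrow> ('i \<times> 'i set) set" where
  "triv \<Lambda> = {(b, B). b \<in> B \<and> B \<subseteq> \<Lambda>}"

definition closure_rel :: "'i set \<Rightarrow> ('i \<times> 'i set) set \<Rightarrow> ('i \<times> 'i set) set" where
  "closure_rel \<Lambda> D = ext \<Lambda> (comp_closure D) \<union> triv \<Lambda>"

definition min_rel :: "('i \<times> 'i set) set \<Rightarrow> ('i \<times> 'i set) set" where
  "min_rel D = {(b, B). (b, B) \<in> D \<and> b \<notin> B \<and> \<not> (\<exists>C. (b, C) \<in> D \<and> C \<subset> B)}"

text \<open>Variables y_A are indexed by A :: nat set; S_[q] uses those with A nonempty, A \<subseteq> [q].\<close>

definition vars :: "nat \<Rightarrow> nat set set" where
  "vars q = {A. A \<noteq> {} \<and> A \<subseteq> {1..q}}"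

type_synonym 'k mpoly = "(nat set \<Rightarrow>\<^sub>0 nat) \<Rightarrow>\<^sub>0 'k"

definition yvar :: "nat set \<Rightarrow> 'k::field mpoly" where
  "yvar A = Poly_Mapping.single (Poly_Mapping.single A 1) 1"

definition S_ring :: "nat \<Rightarrow> 'k::field mpoly set" where
  "S_ring q = {p. \<forall>m \<in> Poly_Mapping.keys p. Poly_Mapping.keys m \<subseteq> vars q}"

definition ideal_gen :: "'a::comm_ring_1 set \<Rightarrow> 'a set \<Rightarrow> 'a set" where
  "ideal_gen R G = {x. \<exists>F f. finite F \<and> F \<subseteq> G \<and> (\<forall>g\<in>F. f g \<in> R) \<and> x = (\<Sum>g\<in>F. f g * g)}"

definition Qset :: "nat \<Rightarrow> rel set \<Rightarrow> nat set set" where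
  "Qset q D = {A. A \<subseteq> {1..q} \<and> A \<noteq> {} \<and> (\<forall>(b, B) \<in> D. b \<in> A \<longrightarrow> A \<inter> B \<noteq> {})}"

definition eps_exp :: "nat \<Rightarrow> rel set \<Rightarrow> nat \<Rightarrow> (nat set \<Rightarrow>\<^sub>0 nat)" where
  "eps_exp q D i = (\<Sum>A \<in> {A \<in> Qset q D. i \<in> A}. Poly_Mapping.single A 1)"

definition eps :: "nat \<Rightarrow> rel set \<Rightarrow> nat \<Rightarrow> 'k::field mpoly" where
  "eps q D i = (\<Prod>A \<in> {A \<in> Qset q D. i \<in> A}. yvar A)"

definition E_ideal :: "nat \<Rightarrow> rel set \<Rightarrow> 'k::field mpoly set" where
  "E_ideal q D = ideal_gen (S_ring q) (eps q D ` {1..q})"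

end

theory Submission
  imports Defs
begin


definition Pset :: "nat \<Rightarrow> rel set \<Rightarrow> rel set" where
  "Pset q D = {(b,B). b \<in> {1..q} \<and> B \<noteq> {} \<and> B \<subseteq> {1..q} \<and> (\<forall>A\<in>Qset q D. b \<in> A \<longrightarrow> A \<inter> B \<noteq> {})}"

lemma lookup_eps_exp:
  "Poly_Mapping.lookup (eps_exp q D i) A = (if A \<in> Qset q D \<and> i \<in> A then 1 else 0)"
proof -
  have fin: "finite {A \<in> Qset q D. i \<in> A}"
    by (rule finite_subset[of _ "Pow {1..q}"]) (auto simp: Qset_def)
  show ?thesis unfolding eps_exp_def lookup_sum lookup_single
    using fin by (simp add: when_def sum.delta)
qed

lemma Div_eq_Pset: "Div {1..q} (eps_exp q D) = Pset q D"
proof -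
  have lcm: "Poly_Mapping.lookup (mono_lcm (eps_exp q D) B) A = (if A \<in> Qset q D \<and> A \<inter> B \<noteq> {} then 1 else 0)"
    if "B \<noteq> {}" "B \<subseteq> {1..q}" for B A
  proof -
    have fB: "finite B" using that finite_subset by blast
    define f where "f = (\<lambda>A. Max ((\<lambda>i. Poly_Mapping.lookup (eps_exp q D i) A) ` B))"
    have fv: "f A = (if A \<in> Qset q D \<and> A \<inter> B \<noteq> {} then 1 else 0)" for A
    proof -
      have "(\<lambda>i. Poly_Mapping.lookup (eps_exp q D i) A) ` B = (\<lambda>i. if A \<in> Qset q D \<and> i \<in> A then 1 else 0) ` B"
        by (simp add: lookup_eps_exp)
      moreover have "Max ((\<lambda>i. if A \<in> Qset q D \<and> i \<in> A then (1::nat) else 0) ` B) = (if A \<in> Qset q D \<and> A \<inter> B \<noteq> {} then 1 else 0)"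
      proof (cases "A \<in> Qset q D \<and> A \<inter> B \<noteq> {}")
        case True
        then obtain i where "i \<in> A" "i \<in> B" by blast
        then show ?thesis using True fB
          by (intro Max_eqI) auto
      next
        case False
        then show ?thesis using fB that(1)
          by (intro Max_eqI) auto
      qed
      ultimately show ?thesis unfolding f_def by simp
    qed
    have "finite {A. f A \<noteq> 0}"
      by (rule finite_subset[of _ "Pow {1..q}"]) (auto simp: fv Qset_def)
    then show ?thesis unfolding mono_lcm_def f_def[symmetric] by (simp add: fv)
  qed
  show ?thesis
  proof (intro set_eqI, clarify)
    fix b B
    show "((b, B) \<in> Div {1..q} (eps_exp q D)) = ((b, B) \<in> Pset q D)"
    proof (cases "B \<noteq> {} \<and> B \<subseteq> {1..q}")
      case True
      then show ?thesis
        unfolding Div_def Pset_def mono_dvd_def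
        by (auto simp: lcm lookup_eps_exp)
    next
      case False
      then show ?thesis unfolding Div_def Pset_def by auto
    qed
  qed
qed

lemma D_sub_Pset:
  assumes "D \<subseteq> {1..q} \<times> Pow {1..q}" "\<forall>(b, B) \<in> D. card B \<ge> 2"
  shows "D \<subseteq> Pset q D"
proof
  fix x assume x: "x \<in> D"
  obtain b B where xb: "x = (b,B)" by force
  have "card B \<ge> 2" using assms(2) x xb by auto
  then have "B \<noteq> {}" by auto
  then show "x \<in> Pset q D" using x xb assms(1) unfolding Pset_def Qset_def by auto
qed

lemma comp_closure_Pset:
  assumes "D \<subseteq> {1..q} \<times> Pow {1..q}" "\<forall>(b, B) \<in> D. card B \<ge> 2"
  shows "x \<in> comp_closure D \<Longrightarrow> x \<in> Pset q D"
proof (induction rule: comp_closure.induct)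
  case (base x)
  then show ?case using D_sub_Pset[OF assms] by blast
next
  case (step x y)
  obtain b B where xb: "x = (b,B)" by force
  obtain c C where yc: "y = (c,C)" by force
  have X: "b \<in> {1..q}" "B \<subseteq> {1..q}" "\<forall>A\<in>Qset q D. b \<in> A \<longrightarrow> A \<inter> B \<noteq> {}"
    using step(3) xb unfolding Pset_def by auto
  have Y: "C \<noteq> {}" "C \<subseteq> {1..q}" "\<forall>A\<in>Qset q D. c \<in> A \<longrightarrow> A \<inter> C \<noteq> {}"
    using step(4) yc unfolding Pset_def by auto
  have "\<forall>A\<in>Qset q D. b \<in> A \<longrightarrow> A \<inter> (B - {c} \<union> C) \<noteq> {}"
  proof (intro ballI impI)
    fix A assume A: "A \<in> Qset q D" "b \<in> A"
    then have "A \<inter> B \<noteq> {}" using X by auto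
    then show "A \<inter> (B - {c} \<union> C) \<noteq> {}"
    proof (cases "A \<inter> B \<subseteq> {c}")
      case True
      then have "c \<in> A" using \<open>A \<inter> B \<noteq> {}\<close> by blast
      then show ?thesis using Y A by auto
    qed auto
  qed
  then show ?case unfolding xb yc comp_def Pset_def using X Y by auto
qed

lemma cc_replace:
  assumes "finite X" "(c,S) \<in> comp_closure D" "\<forall>x\<in>X. \<exists>T\<subseteq>B. (x,T) \<in> comp_closure D"
  shows "\<exists>S'. (c,S') \<in> comp_closure D \<and> S' \<subseteq> (S - X) \<union> B"
  using assms(1,3)
proof (induction X rule: finite_induct)
  case empty
  then show ?case using assms(2) by blast
next
  case (insert x X)
  then obtain S' where S': "(c,S') \<in> comp_closure D" "S' \<subseteq> (S - X) \<union> B" by auto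
  obtain T where T: "T \<subseteq> B" "(x,T) \<in> comp_closure D" using insert.prems by auto
  show ?case
  proof (cases "x \<in> S'")
    case True
    have "comp (c,S') (x,T) \<in> comp_closure D" using S' T by (intro comp_closure.step)
    then show ?thesis using S' T unfolding comp_def by (intro exI[of _ "S' - {x} \<union> T"]) auto
  next
    case False
    then show ?thesis using S' by auto
  qed
qed

lemma closure_eq_Pset:
  assumes "D \<subseteq> {1..q} \<times> Pow {1..q}" "\<forall>(b, B) \<in> D. card B \<ge> 2"
  shows "closure_rel {1..q} D = Pset q D"
proof
  show "closure_rel {1..q} D \<subseteq> Pset q D"
  proof
    fix x assume x: "x \<in> closure_rel {1..q} D"
    obtain b C where xb: "x = (b,C)" by force
    show "x \<in> Pset q D"
    proof (cases "x \<in> triv {1..q}")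
      case True
      then have "b \<in> C" "C \<subseteq> {1..q}" unfolding xb triv_def by auto
      then show ?thesis unfolding xb Pset_def by blast
    next
      case False
      then have "x \<in> ext {1..q} (comp_closure D)" using x unfolding closure_rel_def by blast
      then obtain B where B: "(b,B) \<in> comp_closure D" "B \<subseteq> C" "C \<subseteq> {1..q}"
        unfolding xb ext_def by blast
      have "(b,B) \<in> Pset q D" using comp_closure_Pset[OF assms B(1)] .
      then show ?thesis using B unfolding xb Pset_def by blast
    qed
  qed
next
  show "Pset q D \<subseteq> closure_rel {1..q} D"
  proof
    fix x assume x: "x \<in> Pset q D"
    obtain b B where xb: "x = (b,B)" by force
    have P: "b \<in> {1..q}" "B \<noteq> {}" "B \<subseteq> {1..q}" "\<forall>A\<in>Qset q D. b \<in> A \<longrightarrow> A \<inter> B \<noteq> {}"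
      using x xb unfolding Pset_def by auto
    show "x \<in> closure_rel {1..q} D"
    proof (cases "b \<in> B")
      case True
      then show ?thesis unfolding xb closure_rel_def triv_def using P by auto
    next
      case False
      define cl where "cl = {x. x \<in> B \<or> (\<exists>T\<subseteq>B. (x,T) \<in> comp_closure D)}"
      have "\<exists>T\<subseteq>B. (b,T) \<in> comp_closure D"
      proof (rule ccontr)
        assume nb: "\<not> ?thesis"
        define A where "A = {1..q} - cl"
        have bA: "b \<in> A" using nb False P unfolding A_def cl_def by auto
        have key: "A \<inter> C \<noteq> {}" if y: "(c,C) \<in> D" and cA: "c \<in> A" for c C
        proof
          assume AC: "A \<inter> C = {}"
          have C: "C \<subseteq> {1..q}" using assms y by auto
          then have Ccl: "C \<subseteq> cl" using AC unfolding A_def by auto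
          have fX: "finite (C - B)" using C finite_subset by blast
          have "\<forall>x\<in>C - B. \<exists>T\<subseteq>B. (x,T) \<in> comp_closure D" using Ccl unfolding cl_def by auto
          moreover have "(c,C) \<in> comp_closure D" using y by (simp add: comp_closure.base)
          ultimately obtain S' where "(c,S') \<in> comp_closure D" "S' \<subseteq> (C - (C - B)) \<union> B"
            using cc_replace[OF fX] by blast
          then have "c \<in> cl" unfolding cl_def by auto
          then show False using cA unfolding A_def by auto
        qed
        have "A \<subseteq> {1..q}" "A \<noteq> {}" using bA unfolding A_def by auto
        then have "A \<in> Qset q D" unfolding Qset_def using key by auto
        then have "A \<inter> B \<noteq> {}" using P bA by auto
        then show False unfolding A_def cl_def by auto
      qed
      then obtain T where "T \<subseteq> B" "(b,T) \<in> comp_closure D" by auto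
      then show ?thesis unfolding xb closure_rel_def ext_def using P by auto
    qed
  qed
qed

lemma Qset_from_Pset:
  assumes "D \<subseteq> {1..q} \<times> Pow {1..q}" "\<forall>(b, B) \<in> D. card B \<ge> 2"
  shows "Qset q D = {A. A \<subseteq> {1..q} \<and> A \<noteq> {} \<and> (\<forall>(b,B)\<in>Pset q D. b \<in> A \<longrightarrow> A \<inter> B \<noteq> {})}"
proof -
  have DP: "D \<subseteq> Pset q D" by (rule D_sub_Pset[OF assms])
  show ?thesis
  proof (intro set_eqI iffI)
    fix A assume A: "A \<in> Qset q D"
    have "\<forall>(b,B)\<in>Pset q D. b \<in> A \<longrightarrow> A \<inter> B \<noteq> {}"
      using A unfolding Pset_def by blast
    moreover have "A \<subseteq> {1..q}" "A \<noteq> {}" using A unfolding Qset_def by auto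
    ultimately show "A \<in> {A. A \<subseteq> {1..q} \<and> A \<noteq> {} \<and> (\<forall>(b,B)\<in>Pset q D. b \<in> A \<longrightarrow> A \<inter> B \<noteq> {})}"
      by blast
  next
    fix A assume "A \<in> {A. A \<subseteq> {1..q} \<and> A \<noteq> {} \<and> (\<forall>(b,B)\<in>Pset q D. b \<in> A \<longrightarrow> A \<inter> B \<noteq> {})}"
    then have "A \<subseteq> {1..q}" "A \<noteq> {}" "\<forall>(b,B)\<in>D. b \<in> A \<longrightarrow> A \<inter> B \<noteq> {}"
      using DP by blast+
    then show "A \<in> Qset q D" unfolding Qset_def by blast
  qed
qed

lemma min_determines:
  assumes up: "\<And>b B C. (b,B) \<in> X \<Longrightarrow> B \<subseteq> C \<Longrightarrow> C \<subseteq> {1..q} \<Longrightarrow> (b,C) \<in> X"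
    and tr: "triv {1..q} \<subseteq> X" and sub: "\<And>b B. (b,B) \<in> X \<Longrightarrow> B \<subseteq> {1..(q::nat)}"
  shows "X = triv {1..q} \<union> {(b,C). \<exists>B. (b,B) \<in> min_rel X \<and> B \<subseteq> C \<and> C \<subseteq> {1..q}}"
proof (intro set_eqI iffI)
  fix x assume x: "x \<in> X"
  obtain b C where xb: "x = (b,C)" by force
  have bC: "(b,C) \<in> X" using x xb by simp
  have Cq: "C \<subseteq> {1..q}" using sub[OF bC] .
  show "x \<in> triv {1..q} \<union> {(b,C). \<exists>B. (b,B) \<in> min_rel X \<and> B \<subseteq> C \<and> C \<subseteq> {1..q}}"
  proof (cases "b \<in> C")
    case True
    then have "x \<in> triv {1..q}" unfolding xb triv_def using Cq by simp
    then show ?thesis by (rule UnI1)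
  next
    case False
    define P where "P = (\<lambda>B. B \<subseteq> C \<and> (b,B) \<in> X)"
    have ex: "P C" unfolding P_def using bC by simp
    obtain B where B: "P B" "\<And>B'. P B' \<Longrightarrow> card B \<le> card B'"
      using ex_has_least_nat[of P C card] ex by metis
    have BC: "B \<subseteq> C" and bB: "(b,B) \<in> X" using B(1) unfolding P_def by auto
    have fB: "finite B" using Cq BC finite_subset by (metis finite_atLeastAtMost)
    have nC: "\<not> (\<exists>C'. (b, C') \<in> X \<and> C' \<subset> B)"
    proof
      assume "\<exists>C'. (b, C') \<in> X \<and> C' \<subset> B"
      then obtain C' where C': "(b,C') \<in> X" "C' \<subset> B" by blast
      have "card C' < card B" using fB C'(2) psubset_card_mono by blast
      moreover have "P C'" unfolding P_def using C' BC by blast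
      ultimately show False using B(2)[of C'] by linarith
    qed
    have "b \<notin> B" using BC False by blast
    then have "(b,B) \<in> min_rel X" unfolding min_rel_def using bB nC by simp
    then have "x \<in> {(b,C). \<exists>B. (b,B) \<in> min_rel X \<and> B \<subseteq> C \<and> C \<subseteq> {1..q}}"
      unfolding xb using BC Cq by blast
    then show ?thesis by (rule UnI2)
  qed
next
  fix x assume "x \<in> triv {1..q} \<union> {(b,C). \<exists>B. (b,B) \<in> min_rel X \<and> B \<subseteq> C \<and> C \<subseteq> {1..q}}"
  then show "x \<in> X"
  proof
    assume "x \<in> triv {1..q}" then show ?thesis using tr by blast
  next
    assume "x \<in> {(b,C). \<exists>B. (b,B) \<in> min_rel X \<and> B \<subseteq> C \<and> C \<subseteq> {1..q}}"
    then obtain b C B where "x = (b,C)" "(b,B) \<in> min_rel X" "B \<subseteq> C" "C \<subseteq> {1..q}" by blast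
    then show ?thesis using up[of b B C] unfolding min_rel_def by blast
  qed
qed

lemma Pset_up: "(b,B) \<in> Pset q D \<Longrightarrow> B \<subseteq> C \<Longrightarrow> C \<subseteq> {1..q} \<Longrightarrow> (b,C) \<in> Pset q D"
  unfolding Pset_def by blast

lemma Pset_triv: "triv {1..q} \<subseteq> Pset q D"
  unfolding Pset_def triv_def by blast

lemma Pset_sub: "(b,B) \<in> Pset q D \<Longrightarrow> B \<subseteq> {1..q}"
  unfolding Pset_def by blast



definition Qi :: "nat \<Rightarrow> rel set \<Rightarrow> nat \<Rightarrow> nat set set" where
  "Qi q D i = {A \<in> Qset q D. i \<in> A}"

lemma prod_yvar: "finite S \<Longrightarrow> (\<Prod>A\<in>S. (yvar A :: 'k::field mpoly)) = Poly_Mapping.single (\<Sum>A\<in>S. Poly_Mapping.single A 1) 1"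
proof (induction S rule: finite_induct)
  case empty
  then show ?case by (simp add: one_poly_mapping.abs_eq single.abs_eq)
next
  case (insert x S)
  then show ?case by (simp add: yvar_def mult_single)
qed

lemma eps_single: "(eps q D i :: 'k::field mpoly) = Poly_Mapping.single (eps_exp q D i) 1"
proof -
  have fin: "finite {A \<in> Qset q D. i \<in> A}"
    by (rule finite_subset[of _ "Pow {1..q}"]) (auto simp: Qset_def)
  show ?thesis unfolding eps_def eps_exp_def using prod_yvar[OF fin] by simp
qed

lemma mono_in_ideal:
  assumes "(x :: 'k::field mpoly) \<in> ideal_gen R ((\<lambda>j. Poly_Mapping.single (e j) 1) ` J)"
    and "Poly_Mapping.lookup x m \<noteq> 0"
  shows "\<exists>j\<in>J. \<exists>t. m = t + e j"
proof -
  obtain F f where F: "finite F" "F \<subseteq> (\<lambda>j. Poly_Mapping.single (e j) 1) ` J"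
    "x = (\<Sum>g\<in>F. f g * g)"
    using assms(1) unfolding ideal_gen_def by blast
  have "(\<Sum>g\<in>F. Poly_Mapping.lookup (f g * g) m) \<noteq> 0"
    using assms(2) F(3) by (simp add: lookup_sum)
  then obtain g where g: "g \<in> F" "Poly_Mapping.lookup (f g * g) m \<noteq> 0"
    by (meson sum.not_neutral_contains_not_neutral)
  obtain j where j: "j \<in> J" "g = Poly_Mapping.single (e j) 1" using g(1) F(2) by blast
  have "m \<in> Poly_Mapping.keys (f g * g)" using g(2) by (simp add: in_keys_iff)
  then have "m \<in> {a + b | a b. a \<in> Poly_Mapping.keys (f g) \<and> b \<in> Poly_Mapping.keys g}"
    using keys_mult by blast
  then show ?thesis using j by auto
qed

lemma eps_in_E: "i \<in> {1..q} \<Longrightarrow> (eps q D i :: 'k::field mpoly) \<in> E_ideal q D"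
  unfolding E_ideal_def ideal_gen_def
  apply (rule CollectI)
  apply (rule exI[of _ "{eps q D i}"])
  apply (rule exI[of _ "\<lambda>_. 1"])
  apply (auto simp: S_ring_def)
  done

lemma E_sub:
  assumes "(E_ideal q D1 :: 'k::field mpoly set) = E_ideal q D2" "i \<in> {1..q}"
  shows "\<exists>j\<in>{1..q}. Qi q D2 j \<subseteq> Qi q D1 i"
proof -
  have "(eps q D1 i :: 'k mpoly) \<in> E_ideal q D2" using eps_in_E[OF assms(2), of D1, where 'k='k] assms(1) by simp
  then have mem: "(Poly_Mapping.single (eps_exp q D1 i) 1 :: 'k mpoly) \<in> ideal_gen (S_ring q) ((\<lambda>j. Poly_Mapping.single (eps_exp q D2 j) 1) ` {1..q})"
    unfolding E_ideal_def eps_single .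
  have "Poly_Mapping.lookup (Poly_Mapping.single (eps_exp q D1 i) 1 :: 'k mpoly) (eps_exp q D1 i) \<noteq> 0" by simp
  from mono_in_ideal[OF mem this] obtain j t where j: "j \<in> {1..q}" "eps_exp q D1 i = t + eps_exp q D2 j" by blast
  have "Qi q D2 j \<subseteq> Qi q D1 i"
  proof
    fix A assume A: "A \<in> Qi q D2 j"
    have "Poly_Mapping.lookup (eps_exp q D1 i) A = Poly_Mapping.lookup t A + Poly_Mapping.lookup (eps_exp q D2 j) A"
      using j(2) by (simp add: lookup_add)
    then have "Poly_Mapping.lookup (eps_exp q D1 i) A \<noteq> 0" using A by (simp add: lookup_eps_exp Qi_def)
    then show "A \<in> Qi q D1 i" by (simp add: lookup_eps_exp Qi_def split: if_splits)
  qed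
  then show ?thesis using j(1) by blast
qed

lemma Qi_distinct:
  assumes "D \<subseteq> {1..q} \<times> Pow {1..q}" "\<forall>(b, B) \<in> D. card B \<ge> 2"
    and "i \<in> {1..q}" "k \<in> {1..q}" "k \<noteq> i"
  shows "\<not> Qi q D k \<subseteq> Qi q D i"
proof -
  define A where "A = {1..q} - {i}"
  have "A \<in> Qset q D"
  proof -
    have "A \<inter> B \<noteq> {}" if "(b,B) \<in> D" for b B
    proof -
      have "card B \<ge> 2" "B \<subseteq> {1..q}" using that assms(1,2) by auto
      moreover have "card B \<le> 1" if "B \<subseteq> {i}" using card_mono[OF _ that] by simp
      ultimately have "\<not> B \<subseteq> {i}" by linarith
      then show ?thesis using \<open>B \<subseteq> {1..q}\<close> unfolding A_def by blast
    qed
    moreover have "A \<subseteq> {1..q}" "A \<noteq> {}" using assms(4,5) unfolding A_def by auto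
    ultimately show ?thesis unfolding Qset_def by blast
  qed
  then have "A \<in> Qi q D k" "A \<notin> Qi q D i" using assms(4,5) unfolding Qi_def A_def by auto
  then show ?thesis by blast
qed

lemma E_Qset_sub:
  assumes "(E_ideal q D1 :: 'k::field mpoly set) = E_ideal q D2"
    and "D1 \<subseteq> {1..q} \<times> Pow {1..q}" "\<forall>(b, B) \<in> D1. card B \<ge> 2"
  shows "Qset q D1 \<subseteq> Qset q D2"
proof
  fix A assume A: "A \<in> Qset q D1"
  then obtain i where i: "i \<in> A" "i \<in> {1..q}" unfolding Qset_def by blast
  obtain j where j: "j \<in> {1..q}" "Qi q D2 j \<subseteq> Qi q D1 i" using E_sub[OF assms(1) i(2)] by blast
  obtain k where k: "k \<in> {1..q}" "Qi q D1 k \<subseteq> Qi q D2 j" using E_sub[OF assms(1)[symmetric] j(1)] by blast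
  have "k = i" using Qi_distinct[OF assms(2,3) i(2) k(1)] k(2) j(2) by blast
  then have "A \<in> Qi q D2 j" using A i k(2) unfolding Qi_def by blast
  then show "A \<in> Qset q D2" unfolding Qi_def by blast
qed



theorem theorem3p11:
  fixes q :: nat and D1 D2 :: "rel set"
  assumes "q \<ge> 1"
    and "finite D1" "D1 \<noteq> {}" "D1 \<subseteq> {1..q} \<times> Pow {1..q}"
    and "finite D2" "D2 \<noteq> {}" "D2 \<subseteq> {1..q} \<times> Pow {1..q}"
    and "\<forall>(b, B) \<in> D1 \<union> D2. card B \<ge> 2"
  shows "((E_ideal q D1 :: 'k::field mpoly set) = E_ideal q D2
            \<longleftrightarrow> Div {1..q} (eps_exp q D1) = Div {1..q} (eps_exp q D2))
       \<and> (Div {1..q} (eps_exp q D1) = Div {1..q} (eps_exp q D2)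
            \<longleftrightarrow> closure_rel {1..q} D1 = closure_rel {1..q} D2)
       \<and> (closure_rel {1..q} D1 = closure_rel {1..q} D2
            \<longleftrightarrow> min_rel (closure_rel {1..q} D1) = min_rel (closure_rel {1..q} D2))"
proof -
  have c1: "\<forall>(b, B) \<in> D1. card B \<ge> 2" and c2: "\<forall>(b, B) \<in> D2. card B \<ge> 2" using assms(8) by auto
  have cl1: "closure_rel {1..q} D1 = Pset q D1" by (rule closure_eq_Pset[OF assms(4) c1])
  have cl2: "closure_rel {1..q} D2 = Pset q D2" by (rule closure_eq_Pset[OF assms(7) c2])
  have EQ: "((E_ideal q D1 :: 'k::field mpoly set) = E_ideal q D2) \<longleftrightarrow> Qset q D1 = Qset q D2"
  proof
    assume "(E_ideal q D1 :: 'k::field mpoly set) = E_ideal q D2"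
    then show "Qset q D1 = Qset q D2"
      using E_Qset_sub[OF _ assms(4) c1] E_Qset_sub[OF _ assms(7) c2] by blast
  next
    assume "Qset q D1 = Qset q D2"
    then have "(eps q D1 :: nat \<Rightarrow> 'k mpoly) = eps q D2" unfolding eps_def by simp
    then show "(E_ideal q D1 :: 'k::field mpoly set) = E_ideal q D2" unfolding E_ideal_def by simp
  qed
  have PQ: "Pset q D1 = Pset q D2 \<longleftrightarrow> Qset q D1 = Qset q D2"
  proof
    assume "Pset q D1 = Pset q D2"
    then show "Qset q D1 = Qset q D2"
      using Qset_from_Pset[OF assms(4) c1] Qset_from_Pset[OF assms(7) c2] by simp
  next
    assume "Qset q D1 = Qset q D2"
    then show "Pset q D1 = Pset q D2" unfolding Pset_def by simp
  qed
  have MP: "min_rel (Pset q D1) = min_rel (Pset q D2) \<Longrightarrow> Pset q D1 = Pset q D2"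
  proof -
    assume m: "min_rel (Pset q D1) = min_rel (Pset q D2)"
    have "Pset q D1 = triv {1..q} \<union> {(b,C). \<exists>B. (b,B) \<in> min_rel (Pset q D1) \<and> B \<subseteq> C \<and> C \<subseteq> {1..q}}"
      by (rule min_determines[OF Pset_up Pset_triv Pset_sub])
    also have "\<dots> = triv {1..q} \<union> {(b,C). \<exists>B. (b,B) \<in> min_rel (Pset q D2) \<and> B \<subseteq> C \<and> C \<subseteq> {1..q}}"
      using m by simp
    also have "\<dots> = Pset q D2"
      by (rule min_determines[OF Pset_up Pset_triv Pset_sub, symmetric])
    finally show ?thesis .
  qed
  have MP2: "Pset q D1 = Pset q D2 \<longleftrightarrow> min_rel (Pset q D1) = min_rel (Pset q D2)"
    using MP by metis
  have EP: "((E_ideal q D1 :: 'k::field mpoly set) = E_ideal q D2) \<longleftrightarrow> Pset q D1 = Pset q D2"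
    using EQ PQ by simp
  show ?thesis
    unfolding Div_eq_Pset cl1 cl2 using EP MP2 by simp
qed

end
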